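(* Let $T_0=pD^2+q_0D+r_0$ be a second-order rational operator, let $\phi_1,\dots,\phi_n$ be quasi-rational functions with $T_0\phi_k=\lambda_k\phi_k$ for pairwise distinct constants $\lambda_1,\dots,\lambda_n$, and let $b_1,\dots,b_n$ be nonzero rational functions. For $k=1,\dots,n$ set $\sigma_k=\sum_{j=1}^k (\log b_j)'$, $\upsilon_k=\phi_{(1,\dots,k)}'/\phi_{(1,\dots,k)}$, and $\sigma_0=\upsilon_0=0$; $q_k=q_0+kp'-2p\sigma_k$, $r_k=r_0+kq_0'+\tfrac12k(k-1)p''+\upsilon_kp'-\sigma_k(q_0+kp')+(\sigma_k^2-\sigma_k'+2\upsilon_k')p$, $w_k=\sigma_{k-1}+\upsilon_k-\upsilon_{k-1}$, and define $T_k=pD^2+q_kD+r_k$, $A_k=b_k(D-w_k)$. Then $A_kT_{k-1}=T_kA_k$ for all $k=1,\dots,n$; i.e. $T_0\to T_1\to\cdots\to T_n$ is an $n$-step rational Darboux transformation.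
   Context: $D=d/dz$, primes denote $d/dz$. A rational operator has rational coefficients; a function is quasi-rational if its logarithmic derivative is rational. $\phi_{(i_1,\dots,i_k)}:=\mathrm{Wr}[\phi_{i_1},\dots,\phi_{i_k}]$ denotes the Wronskian determinant. An $n$-step rational Darboux transformation $T_0\to\cdots\to T_n$ means there are first-order rational operators $A_k$ with $A_kT_{k-1}=T_kA_k$. *)

theory Defs
  imports "Jordan_Normal_Form.Determinant" "HOL-Computational_Algebra.Polynomial"
begin

text \<open>Abstract setting: a field K (type 'a) with a derivation d (playing the role of D = d/dz),
  an embedding c of the complex constants, and an element z with d z = 1.
  Rational functions are the elements P(z)/Q(z) with complex polynomials P, Q.\<close>

definition diff_field_over :: "('a::field \<Rightarrow> 'a) \<Rightarrow> (complex \<Rightarrow> 'a) \<Rightarrow> 'a \<Rightarrow> bool" where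
  "diff_field_over d c z \<longleftrightarrow>
     (\<forall>x y. d (x + y) = d x + d y) \<and>
     (\<forall>x y. d (x * y) = d x * y + x * d y) \<and>
     (\<forall>a b. c (a + b) = c a + c b) \<and>
     (\<forall>a b. c (a * b) = c a * c b) \<and>
     c 1 = 1 \<and>
     (\<forall>a. d (c a) = 0) \<and>
     d z = 1"

definition is_rational :: "(complex \<Rightarrow> 'a::field) \<Rightarrow> 'a \<Rightarrow> 'a \<Rightarrow> bool" where
  "is_rational c z f \<longleftrightarrow>
     (\<exists>P Q :: complex poly. poly (map_poly c Q) z \<noteq> 0 \<and>
        f = poly (map_poly c P) z / poly (map_poly c Q) z)"

definition quasi_rational :: "('a::field \<Rightarrow> 'a) \<Rightarrow> (complex \<Rightarrow> 'a) \<Rightarrow> 'a \<Rightarrow> 'a \<Rightarrow> bool" where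
  "quasi_rational d c z f \<longleftrightarrow> f \<noteq> 0 \<and> is_rational c z (d f / f)"

definition op2 :: "('a::field \<Rightarrow> 'a) \<Rightarrow> 'a \<Rightarrow> 'a \<Rightarrow> 'a \<Rightarrow> 'a \<Rightarrow> 'a" where
  "op2 d p q r y = p * d (d y) + q * d y + r * y"

definition op1 :: "('a::field \<Rightarrow> 'a) \<Rightarrow> 'a \<Rightarrow> 'a \<Rightarrow> 'a \<Rightarrow> 'a" where
  "op1 d b w y = b * (d y - w * y)"

text \<open>Wronskian Wr[f_1,...,f_k] (indices 1..k), i.e. phi_(1,...,k).\<close>
definition wronskian :: "('a::field \<Rightarrow> 'a) \<Rightarrow> (nat \<Rightarrow> 'a) \<Rightarrow> nat \<Rightarrow> 'a" where
  "wronskian d f k = det (mat k k (\<lambda>(i, j). (d ^^ i) (f (Suc j))))"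

definition sigma :: "('a::field \<Rightarrow> 'a) \<Rightarrow> (nat \<Rightarrow> 'a) \<Rightarrow> nat \<Rightarrow> 'a" where
  "sigma d b k = (\<Sum>j = 1..k. d (b j) / b j)"

definition upsilon :: "('a::field \<Rightarrow> 'a) \<Rightarrow> (nat \<Rightarrow> 'a) \<Rightarrow> nat \<Rightarrow> 'a" where
  "upsilon d f k = d (wronskian d f k) / wronskian d f k"

definition qk :: "('a::field \<Rightarrow> 'a) \<Rightarrow> 'a \<Rightarrow> 'a \<Rightarrow> (nat \<Rightarrow> 'a) \<Rightarrow> nat \<Rightarrow> 'a" where
  "qk d p q0 b k = q0 + of_nat k * d p - 2 * p * sigma d b k"

definition rk :: "('a::field \<Rightarrow> 'a) \<Rightarrow> 'a \<Rightarrow> 'a \<Rightarrow> 'a \<Rightarrow> (nat \<Rightarrow> 'a) \<Rightarrow> (nat \<Rightarrow> 'a) \<Rightarrow> nat \<Rightarrow> 'a" where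
  "rk d p q0 r0 b f k =
     r0 + of_nat k * d q0 + (1/2) * of_nat k * (of_nat k - 1) * d (d p)
     + upsilon d f k * d p - sigma d b k * (q0 + of_nat k * d p)
     + ((sigma d b k)^2 - d (sigma d b k) + 2 * d (upsilon d f k)) * p"

definition wk :: "('a::field \<Rightarrow> 'a) \<Rightarrow> (nat \<Rightarrow> 'a) \<Rightarrow> (nat \<Rightarrow> 'a) \<Rightarrow> nat \<Rightarrow> 'a" where
  "wk d b f k = sigma d b (k - 1) + upsilon d f k - upsilon d f (k - 1)"

end

theory Submission imports Defs begin

definition Wr :: "('a::field \<Rightarrow> 'a) \<Rightarrow> nat \<Rightarrow> (nat \<Rightarrow> 'a) \<Rightarrow> nat \<Rightarrow> 'a" where
  "Wr d s f k = det (mat k k (\<lambda>(i,j). (d^^i) (f (s+j))))"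

fun Cf :: "('a::field \<Rightarrow> 'a) \<Rightarrow> 'a \<Rightarrow> nat \<Rightarrow> nat \<Rightarrow> 'a" where
  "Cf d a 0 l = (if l = 0 then a else 0)"
| "Cf d a (Suc n) l = d (Cf d a n l) + (if l = 0 then 0 else Cf d a n (l - 1))"

fun Fch :: "('a::field \<Rightarrow> 'a) \<Rightarrow> (nat \<Rightarrow> 'a) \<Rightarrow> nat \<Rightarrow> nat \<Rightarrow> 'a" where
  "Fch d f 0 = f"
| "Fch d f (Suc m) = (\<lambda>j. d (Fch d f m j) - (d (Fch d f m (Suc m)) / Fch d f m (Suc m)) * Fch d f m j)"

locale dfo =
  fixes d :: "'a::field \<Rightarrow> 'a" and c :: "complex \<Rightarrow> 'a" and z :: 'a
  assumes dfo: "diff_field_over d c z"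
begin

lemma d_add[simp]: "d (x + y) = d x + d y" using dfo by (simp add: diff_field_over_def)
lemma d_mult[simp]: "d (x * y) = d x * y + x * d y" using dfo by (simp add: diff_field_over_def)
lemma c_add: "c (a + b) = c a + c b" using dfo by (simp add: diff_field_over_def)
lemma c_mult: "c (a * b) = c a * c b" using dfo by (simp add: diff_field_over_def)
lemma c_one[simp]: "c 1 = 1" using dfo by (simp add: diff_field_over_def)
lemma d_c[simp]: "d (c a) = 0" using dfo by (simp add: diff_field_over_def)
lemma d_z[simp]: "d z = 1" using dfo by (simp add: diff_field_over_def)

lemma d_zero[simp]: "d 0 = 0"
  using d_add[of 0 0] by (metis add_0 add_cancel_right_right)
lemma d_one[simp]: "d 1 = 0" using d_c[of 1] by simp
lemma d_uminus[simp]: "d (- x) = - d x"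
proof -
  have "d (x + - x) = d x + d (- x)" by (rule d_add)
  thus ?thesis by (simp add: eq_neg_iff_add_eq_0 add.commute)
qed
lemma d_diff[simp]: "d (x - y) = d x - d y"
  using d_add[of x "-y"] by simp
lemma d_of_nat[simp]: "d (of_nat n) = 0"
  by (induction n) auto
lemma d_numeral[simp]: "d (numeral k) = 0"
  using d_of_nat[of "numeral k"] by simp
lemma d_power2[simp]: "d (x^2) = 2 * x * d x"
  by (simp add: power2_eq_square algebra_simps)
lemma d_divide: assumes "y \<noteq> 0" shows "d (x / y) = (d x * y - x * d y) / y^2"
proof -
  have "x = (x/y)*y" using assms by simp
  hence e: "d x = d (x/y) * y + (x/y) * d y" by (metis d_mult)
  have "d (x/y) * y = d x - (x/y) * d y" using e by (simp add: algebra_simps)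
  hence "d (x/y) = (d x - (x/y) * d y) / y" using assms by (simp add: eq_divide_eq)
  also have "\<dots> = (d x * y - x * d y) / y^2" using assms by (simp add: field_simps power2_eq_square)
  finally show ?thesis .
qed
lemma d_const_mult: "d k = 0 \<Longrightarrow> d (k * x) = k * d x" by simp
lemma d_sum: "d (sum f A) = (\<Sum>i\<in>A. d (f i))"
  by (induction A rule: infinite_finite_induct) auto

lemma c_zero[simp]: "c 0 = 0"
  using c_add[of 0 0] by (metis add_0 add_cancel_right_right)
lemma c_uminus: "c (- a) = - c a"
proof -
  have "c (a + - a) = c a + c (- a)" by (rule c_add)
  thus ?thesis by (simp add: eq_neg_iff_add_eq_0 add.commute)
qed
lemma c_inj: assumes "c a = c b" shows "a = b"
proof (rule ccontr)
  assume ab: "a \<noteq> b"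
  have "(a - b) * (1 / (a - b)) = 1" using ab by simp
  hence "c (a - b) * c (1/(a-b)) = 1" by (metis c_mult c_one)
  moreover have "c (a - b) = 0" using assms c_add[of a "-b"] c_uminus[of b] by simp
  ultimately show False by simp
qed
lemma two_ne: "(2::'a) \<noteq> 0"
proof
  assume h: "(2::'a) = 0"
  have "c (1+1) = c 1 + c 1" by (rule c_add)
  hence "c 2 = (2::'a)" by (simp add: one_add_one)
  hence "c 2 = c 0" using h by simp
  hence "(2::complex) = 0" by (rule c_inj)
  thus False by simp
qed

lemma funpow_d_zero[simp]: "(d^^n) 0 = 0" by (induction n) auto
lemma funpow_d_diff: "(d^^n) (x - y) = (d^^n) x - (d^^n) y" by (induction n) auto
lemma funpow_d_add: "(d^^n) (x + y) = (d^^n) x + (d^^n) y" by (induction n) auto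
lemma funpow_d_sum: "(d^^n) (sum f A) = (\<Sum>i\<in>A. (d^^n) (f i))"
  by (induction A rule: infinite_finite_induct) (auto simp: funpow_d_add)


lemma darboux_diff:
  assumes hb: "d b = be * b"
  shows "op1 d b w (op2 d p q r y) - op2 d p (q + d p - 2*p*be) (r + d q + 2*p*d w + d p * w - p * d be + p*be^2 - be*(q + d p)) (op1 d b w y)
     = b * y * d (p * (d w + w^2) + q * w + r)"
  unfolding op1_def op2_def by (simp add: hb power2_eq_square algebra_simps)


lemma Cf_zero: "n < l \<Longrightarrow> Cf d a n l = 0"
  by (induction n arbitrary: l) auto

lemma leib: "(d^^n) (a * y) = (\<Sum>l<Suc n. Cf d a n l * (d^^l) y)"
proof (induction n)
  case 0
  then show ?case by simp
next
  case (Suc n)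
  have "(d^^Suc n) (a * y) = d (\<Sum>l<Suc n. Cf d a n l * (d^^l) y)" using Suc by simp
  also have "\<dots> = (\<Sum>l<Suc n. d (Cf d a n l) * (d^^l) y) + (\<Sum>l<Suc n. Cf d a n l * (d^^Suc l) y)"
    by (simp add: d_sum sum.distrib)
  also have "(\<Sum>l<Suc n. d (Cf d a n l) * (d^^l) y) = (\<Sum>l<Suc (Suc n). d (Cf d a n l) * (d^^l) y)"
    by (simp add: Cf_zero)
  also have "(\<Sum>l<Suc n. Cf d a n l * (d^^Suc l) y) = (\<Sum>l<Suc (Suc n). (if l = 0 then 0 else Cf d a n (l - 1)) * (d^^l) y)"
    by (subst sum.lessThan_Suc_shift) simp
  finally show ?case by (simp add: sum.distrib[symmetric] algebra_simps)
qed

lemma Wr_step: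
  assumes fs: "f s \<noteq> 0"
  shows "Wr d s f (Suc k) = f s * Wr d (Suc s) (\<lambda>j. d (f j) - (d (f s) / f s) * f j) k"
proof -
  define a where "a = d (f s) / f s"
  define g where "g = (\<lambda>j. d (f j) - a * f j)"
  have gs: "g s = 0" using fs by (simp add: g_def a_def)
  define M where "M = mat (Suc k) (Suc k) (\<lambda>(i,j). (d^^i) (f (s+j)))"
  define E where "E = mat (Suc k) (Suc k) (\<lambda>(i,l). if i = 0 then (if l = 0 then 1 else 0)
      else if l = i then 1 else if l < i then - Cf d a (i - 1) l else (0::'a))"
  have Ec: "E \<in> carrier_mat (Suc k) (Suc k)" and Mc: "M \<in> carrier_mat (Suc k) (Suc k)"
    by (auto simp: E_def M_def)
  have detE: "det E = 1"
  proof -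
    have "det E = prod_list (diag_mat E)"
      by (rule det_lower_triangular[OF _ Ec]) (auto simp: E_def)
    also have "diag_mat E = map (\<lambda>i. 1) [0..<Suc k]"
      by (auto simp: diag_mat_def E_def)
    finally show ?thesis by (simp add: map_replicate_const)
  qed
  define N where "N = E * M"
  have Nc: "N \<in> carrier_mat (Suc k) (Suc k)" using Ec Mc by (simp add: N_def)
  have detN: "det N = det M" using det_mult[OF Ec Mc] detE by (simp add: N_def)
  have N0: "N $$ (0, j) = f (s + j)" if "j < Suc k" for j
  proof -
    have "N $$ (0, j) = (\<Sum>l\<in>{0..<Suc k}. E $$ (0,l) * M $$ (l, j))"
      using that Ec Mc by (simp add: N_def scalar_prod_def)
    also have "\<dots> = (\<Sum>l\<in>{0..<Suc k}. if l = 0 then M $$ (0, j) else 0)"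
      by (rule sum.cong) (auto simp: E_def)
    also have "\<dots> = f (s + j)" using that by (simp add: M_def)
    finally show ?thesis .
  qed
  have NS: "N $$ (Suc i, j) = (d^^i) (g (s + j))" if "i < k" "j < Suc k" for i j
  proof -
    have "N $$ (Suc i, j) = (\<Sum>l\<in>{0..<Suc k}. E $$ (Suc i,l) * M $$ (l, j))"
      using that Ec Mc by (simp add: N_def scalar_prod_def)
    also have "\<dots> = (\<Sum>l\<in>{0..<Suc k}. (if l = Suc i then M $$ (l, j) else 0)
          - (if l < Suc i then Cf d a i l * M $$ (l, j) else 0))"
      by (rule sum.cong) (use that in \<open>auto simp: E_def\<close>)
    also have "\<dots> = M $$ (Suc i, j) - (\<Sum>l<Suc i. Cf d a i l * M $$ (l, j))"
    proof -
      have "(\<Sum>l\<in>{0..<Suc k}. (if l < Suc i then Cf d a i l * M $$ (l, j) else 0))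
          = (\<Sum>l\<in>{0..<Suc k} \<inter> {l. l < Suc i}. Cf d a i l * M $$ (l, j))"
        by (simp add: sum.inter_restrict)
      also have "{0..<Suc k} \<inter> {l. l < Suc i} = {..<Suc i}" using that by auto
      finally show ?thesis using that by (simp add: sum_subtractf)
    qed
    also have "\<dots> = (d^^Suc i) (f (s+j)) - (\<Sum>l<Suc i. Cf d a i l * (d^^l) (f (s+j)))"
      using that by (simp add: M_def)
    also have "\<dots> = (d^^i) (d (f (s+j))) - (d^^i) (a * f (s+j))"
      by (simp add: leib funpow_Suc_right del: funpow.simps)
    also have "\<dots> = (d^^i) (g (s + j))" by (simp add: g_def funpow_d_diff)
    finally show ?thesis .
  qed
  have "det N = (\<Sum>i<Suc k. N $$ (i,0) * cofactor N i 0)"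
    by (rule laplace_expansion_column[OF Nc]) simp
  also have "\<dots> = N $$ (0,0) * cofactor N 0 0"
    by (subst sum.lessThan_Suc_shift) (simp add: NS gs)
  also have "\<dots> = f s * det (mat_delete N 0 0)"
    by (simp add: N0 cofactor_def)
  also have "mat_delete N 0 0 = mat k k (\<lambda>(i,j). (d^^i) (g (Suc s + j)))"
    by (rule eq_matI) (use Nc in \<open>auto simp: mat_delete_def NS\<close>)
  finally show ?thesis using detN by (simp add: Wr_def M_def g_def a_def)
qed


abbreviation ev :: "complex poly \<Rightarrow> 'a" where "ev P \<equiv> poly (map_poly c P) z"

lemma ev_pCons[simp]: "ev (pCons a P) = c a + z * ev P"
  by (simp add: map_poly_pCons)

lemma ev_add: "ev (P + Q) = ev P + ev Q"
proof (induction P arbitrary: Q rule: pCons_induct)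
  case 0 then show ?case by simp
next
  case (pCons a P)
  show ?case
  proof (cases Q rule: pCons_cases)
    case (pCons b Q')
    then show ?thesis using pCons.IH[of Q'] by (simp add: c_add algebra_simps)
  qed
qed

lemma ev_smult: "ev (smult a P) = c a * ev P"
  by (induction P rule: pCons_induct) (simp_all add: c_mult algebra_simps)

lemma ev_mult: "ev (P * Q) = ev P * ev Q"
  by (induction P rule: pCons_induct) (simp_all add: ev_add ev_smult algebra_simps)

lemma ev_const: "ev [:a:] = c a" by simp

lemma ev_one: "ev 1 = 1" by (simp add: one_pCons)

lemma ev_uminus: "ev (- P) = - ev P"
proof -
  have "ev P + ev (- P) = ev (P + - P)" by (rule ev_add[symmetric])
  also have "\<dots> = 0" by simp
  finally show ?thesis by (simp add: eq_neg_iff_add_eq_0 add.commute)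
qed

lemma ev_diff: "ev (P - Q) = ev P - ev Q"
  using ev_add[of P "-Q"] ev_uminus[of Q] by simp

lemma ev_pderiv: "d (ev P) = ev (pderiv P)"
  by (induction P rule: pCons_induct) (simp_all add: pderiv_pCons ev_add)

lemma rat_ev: "is_rational c z (ev P)"
  unfolding is_rational_def by (rule exI[of _ P], rule exI[of _ 1]) (simp add: ev_one)

lemma rat_const: "is_rational c z (c a)"
  using rat_ev[of "[:a:]"] by simp

lemma rat_zero: "is_rational c z 0" using rat_const[of 0] by simp
lemma rat_one: "is_rational c z 1" using rat_const[of 1] by simp

lemma rat_add: assumes "is_rational c z f" "is_rational c z g" shows "is_rational c z (f + g)"
proof -
  obtain P1 Q1 where 1: "ev Q1 \<noteq> 0" "f = ev P1 / ev Q1" using assms(1) unfolding is_rational_def by blast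
  obtain P2 Q2 where 2: "ev Q2 \<noteq> 0" "g = ev P2 / ev Q2" using assms(2) unfolding is_rational_def by blast
  have "f + g = ev (P1 * Q2 + P2 * Q1) / ev (Q1 * Q2)" unfolding 1(2) 2(2) using 1(1) 2(1) by (simp add: ev_add ev_mult field_simps)
  moreover have "ev (Q1 * Q2) \<noteq> 0" using 1 2 by (simp add: ev_mult)
  ultimately show ?thesis unfolding is_rational_def by blast
qed

lemma rat_mult: assumes "is_rational c z f" "is_rational c z g" shows "is_rational c z (f * g)"
proof -
  obtain P1 Q1 where 1: "ev Q1 \<noteq> 0" "f = ev P1 / ev Q1" using assms(1) unfolding is_rational_def by blast
  obtain P2 Q2 where 2: "ev Q2 \<noteq> 0" "g = ev P2 / ev Q2" using assms(2) unfolding is_rational_def by blast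
  have "f * g = ev (P1 * P2) / ev (Q1 * Q2)" using 1 2 by (simp add: ev_mult)
  moreover have "ev (Q1 * Q2) \<noteq> 0" using 1 2 by (simp add: ev_mult)
  ultimately show ?thesis unfolding is_rational_def by blast
qed

lemma rat_uminus: assumes "is_rational c z f" shows "is_rational c z (- f)"
  using rat_mult[OF rat_const[of "-1"] assms] by (simp add: c_uminus)

lemma rat_diff: assumes "is_rational c z f" "is_rational c z g" shows "is_rational c z (f - g)"
  using rat_add[OF assms(1) rat_uminus[OF assms(2)]] by simp

lemma rat_divide: assumes "is_rational c z f" "is_rational c z g" shows "is_rational c z (f / g)"
proof -
  obtain P1 Q1 where 1: "ev Q1 \<noteq> 0" "f = ev P1 / ev Q1" using assms(1) unfolding is_rational_def by blast
  obtain P2 Q2 where 2: "ev Q2 \<noteq> 0" "g = ev P2 / ev Q2" using assms(2) unfolding is_rational_def by blast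
  show ?thesis
  proof (cases "ev P2 = 0")
    case True
    then show ?thesis using 2 rat_zero by simp
  next
    case False
    have "f / g = ev (P1 * Q2) / ev (Q1 * P2)" unfolding 1(2) 2(2) using 1(1) 2(1) False by (simp add: ev_mult field_simps)
    moreover have "ev (Q1 * P2) \<noteq> 0" using 1 False by (simp add: ev_mult)
    ultimately show ?thesis unfolding is_rational_def by blast
  qed
qed

lemma rat_d: assumes "is_rational c z f" shows "is_rational c z (d f)"
proof -
  obtain P Q where 1: "ev Q \<noteq> 0" "f = ev P / ev Q" using assms(1) unfolding is_rational_def by blast
  have "d f = ev (pderiv P * Q - P * pderiv Q) / ev (Q * Q)"
    using 1 by (simp add: d_divide ev_pderiv ev_diff ev_mult power2_eq_square)
  moreover have "ev (Q * Q) \<noteq> 0" using 1 by (simp add: ev_mult)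
  ultimately show ?thesis unfolding is_rational_def by blast
qed

lemma c_of_nat: "c (of_nat n) = of_nat n"
  by (induction n) (simp_all add: c_add)

lemma rat_of_nat: "is_rational c z (of_nat n)"
  using rat_const[of "of_nat n"] by (simp add: c_of_nat)

lemma rat_numeral: "is_rational c z (numeral k)"
  using rat_of_nat[of "numeral k"] by simp

lemma rat_sum: "(\<And>i. i \<in> A \<Longrightarrow> is_rational c z (f i)) \<Longrightarrow> is_rational c z (sum f A)"
  by (induction A rule: infinite_finite_induct) (auto simp: rat_zero rat_add)

lemma rat_power2: "is_rational c z f \<Longrightarrow> is_rational c z (f^2)"
  by (simp add: power2_eq_square rat_mult)


lemma W_prod: "(\<forall>i<k. Fch d f (m+i) (Suc (m+i)) \<noteq> 0) \<Longrightarrow>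
   Wr d (Suc m) (Fch d f m) k = (\<Prod>i<k. Fch d f (m+i) (Suc (m+i)))"
proof (induction k arbitrary: m)
  case 0
  then show ?case by (simp add: Wr_def)
next
  case (Suc k)
  have h0: "Fch d f m (Suc m) \<noteq> 0" using Suc.prems by (metis add_0_right zero_less_Suc)
  have "Wr d (Suc m) (Fch d f m) (Suc k) = Fch d f m (Suc m) * Wr d (Suc (Suc m)) (Fch d f (Suc m)) k"
    using Wr_step[of "Fch d f m" "Suc m" k, OF h0] by simp
  also have "Wr d (Suc (Suc m)) (Fch d f (Suc m)) k = (\<Prod>i<k. Fch d f (Suc m+i) (Suc (Suc m+i)))"
    using Suc.IH[of "Suc m"] Suc.prems by fastforce
  also have "Fch d f m (Suc m) * (\<Prod>i<k. Fch d f (Suc m+i) (Suc (Suc m+i))) = (\<Prod>i<Suc k. Fch d f (m+i) (Suc (m+i)))"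
    by (subst prod.lessThan_Suc_shift) (simp del: Fch.simps)
  finally show ?case .
qed

lemma wronskian_prod: "(\<forall>i<k. Fch d f i (Suc i) \<noteq> 0) \<Longrightarrow>
   wronskian d f k = (\<Prod>i<k. Fch d f i (Suc i))"
  using W_prod[of k f 0] by (simp add: Wr_def wronskian_def)

lemma ld_mult: "x \<noteq> 0 \<Longrightarrow> y \<noteq> 0 \<Longrightarrow> d (x*y) / (x*y) = d x / x + d y / y"
  by (simp add: field_simps)

lemma ld_prod: "finite A \<Longrightarrow> (\<forall>i\<in>A. f i \<noteq> 0) \<Longrightarrow> d (prod f A) / prod f A = (\<Sum>i\<in>A. d (f i) / f i)"
proof (induction A rule: finite_induct)
  case empty
  then show ?case by simp
next
  case (insert x A)
  have P: "prod f A \<noteq> 0" using insert by simp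
  have fx: "f x \<noteq> 0" using insert by simp
  have "d (prod f (insert x A)) / prod f (insert x A) = d (f x * prod f A) / (f x * prod f A)"
    using insert by simp
  also have "\<dots> = d (f x) / f x + d (prod f A) / prod f A" by (rule ld_mult[OF fx P])
  finally show ?case using insert by simp
qed

lemma op2_const: "d k = 0 \<Longrightarrow> op2 d p q r (k * y) = k * op2 d p q r y"
  by (simp add: op2_def algebra_simps)

lemma op1_const: "d k = 0 \<Longrightarrow> op1 d b w (k * y) = k * op1 d b w y"
  by (simp add: op1_def algebra_simps)

end

locale setting = dfo d c z for d :: "'a::field \<Rightarrow> 'a" and c z +
  fixes p q0 r0 :: 'a and phi b :: "nat \<Rightarrow> 'a" and lam :: "nat \<Rightarrow> complex" and n :: nat
  assumes rp: "is_rational c z p" and p0: "p \<noteq> 0" and rq: "is_rational c z q0" and rr: "is_rational c z r0"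
  and qr: "\<forall>k\<in>{1..n}. quasi_rational d c z (phi k)"
  and eig: "\<forall>k\<in>{1..n}. op2 d p q0 r0 (phi k) = c (lam k) * phi k"
  and inj: "inj_on lam {1..n}"
  and rb: "\<forall>k\<in>{1..n}. is_rational c z (b k) \<and> b k \<noteq> 0"
begin

abbreviation "F \<equiv> Fch d phi"
abbreviation "B m \<equiv> (\<Prod>i\<in>{1..m}. b i)"
abbreviation "Q \<equiv> qk d p q0 b"
abbreviation "R \<equiv> rk d p q0 r0 b phi"
abbreviation "Wk \<equiv> wk d b phi"
abbreviation "I m \<equiv> (\<forall>j\<in>{Suc m..n}. F m j \<noteq> 0 \<and> op2 d p (Q m) (R m) (B m * F m j) = c (lam j) * (B m * F m j))"

lemma B_facts: "m \<le> n \<Longrightarrow> B m \<noteq> 0 \<and> d (B m) = sigma d b m * B m"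
proof (induction m)
  case 0
  then show ?case by (simp add: sigma_def)
next
  case (Suc m)
  have bs: "b (Suc m) \<noteq> 0" using rb Suc.prems by auto
  have IH: "B m \<noteq> 0" "d (B m) = sigma d b m * B m" using Suc by auto
  show ?case using bs IH by (simp add: sigma_def field_simps)
qed

lemma I0: "I 0"
proof -
  have "wronskian d phi 0 = 1" by (simp add: wronskian_def)
  hence u0: "upsilon d phi 0 = 0" by (simp add: upsilon_def)
  show ?thesis
  proof
    fix j assume j: "j \<in> {Suc 0..n}"
    hence "phi j \<noteq> 0" using qr by (auto simp: quasi_rational_def)
    moreover have "op2 d p (Q 0) (R 0) (B 0 * F 0 j) = c (lam j) * (B 0 * F 0 j)"
      using eig j by (simp add: qk_def rk_def sigma_def u0)
    ultimately show "F 0 j \<noteq> 0 \<and> op2 d p (Q 0) (R 0) (B 0 * F 0 j) = c (lam j) * (B 0 * F 0 j)" by simp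
  qed
qed


lemma step:
  assumes m: "m < n" and IH: "\<forall>i\<le>m. I i"
  shows "(\<forall>y. op1 d (b (Suc m)) (Wk (Suc m)) (op2 d p (Q m) (R m) y)
            = op2 d p (Q (Suc m)) (R (Suc m)) (op1 d (b (Suc m)) (Wk (Suc m)) y)) \<and> I (Suc m)
         \<and> upsilon d phi (Suc m) = upsilon d phi m + d (F m (Suc m)) / F m (Suc m)
         \<and> wronskian d phi (Suc m) \<noteq> 0"
proof -
  have Fnz: "F i (Suc i) \<noteq> 0" if "i \<le> m" for i
    using IH that m by fastforce
  have Wm: "wronskian d phi m = (\<Prod>i<m. F i (Suc i))"
    by (rule wronskian_prod) (use Fnz in auto)
  have WSm: "wronskian d phi (Suc m) = wronskian d phi m * F m (Suc m)"
    using wronskian_prod[of "Suc m" phi] Fnz Wm by (simp del: Fch.simps)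
  have Wnz: "wronskian d phi m \<noteq> 0" using Wm Fnz by (simp del: Fch.simps)
  have Fm: "F m (Suc m) \<noteq> 0" using Fnz by simp
  define a where "a = d (F m (Suc m)) / F m (Suc m)"
  have up: "upsilon d phi (Suc m) = upsilon d phi m + a"
    unfolding upsilon_def WSm a_def by (rule ld_mult[OF Wnz Fm])
  have Bnz: "B m \<noteq> 0" and dB: "d (B m) = sigma d b m * B m" using B_facts[of m] m by auto
  have wdef: "Wk (Suc m) = sigma d b m + a" by (simp add: wk_def up)
  define w where "w = Wk (Suc m)"
  define psi where "psi = B m * F m (Suc m)"
  have psinz: "psi \<noteq> 0" using Bnz Fm by (simp add: psi_def del: Fch.simps)
  have dpsi: "d psi = w * psi"
    using Fm dB unfolding psi_def w_def wdef a_def by (simp add: field_simps del: Fch.simps)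
  have ddpsi: "d (d psi) = (d w + w^2) * psi"
    by (simp add: dpsi power2_eq_square algebra_simps)
  have eigpsi: "op2 d p (Q m) (R m) psi = c (lam (Suc m)) * psi"
    using IH m unfolding psi_def by fastforce
  hence "(p * (d w + w^2) + Q m * w + R m) * psi = c (lam (Suc m)) * psi"
    unfolding op2_def ddpsi dpsi by (simp add: dpsi algebra_simps power2_eq_square)
  hence Rc: "p * (d w + w^2) + Q m * w + R m = c (lam (Suc m))" using psinz by simp
  have dR: "d (p * (d w + w^2) + Q m * w + R m) = 0" unfolding Rc by simp
  have bs: "b (Suc m) \<noteq> 0" using rb m by auto
  define be where "be = d (b (Suc m)) / b (Suc m)"
  have hb: "d (b (Suc m)) = be * b (Suc m)" using bs by (simp add: be_def)
  have hs: "sigma d b (Suc m) = sigma d b m + be" by (simp add: sigma_def be_def)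
  have hq: "Q (Suc m) = Q m + d p - 2*p*be" by (simp add: qk_def hs algebra_simps)
  have h12: "(1/2::'a) * 2 = 1" using two_ne by simp
  have hh: "(1/2) * of_nat (Suc m) * (of_nat (Suc m) - 1) = (1/2) * of_nat m * (of_nat m - 1) + (of_nat m :: 'a)"
  proof -
    have gen: "\<And>h::'a. h * of_nat (Suc m) * (of_nat (Suc m) - 1) - (h * of_nat m * (of_nat m - 1) + of_nat m) = (h*2 - 1) * of_nat m"
      by (simp add: algebra_simps)
    have "(1/2) * of_nat (Suc m) * (of_nat (Suc m) - 1) - ((1/2) * of_nat m * (of_nat m - 1) + (of_nat m :: 'a)) = 0"
      using gen[of "1/2"] h12 by simp
    thus ?thesis by (simp only: right_minus_eq)
  qed
  have hr: "R (Suc m) = R m + d (Q m) + 2*p*d w + d p * w - p * d be + p*be^2 - be*(Q m + d p)"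
    unfolding rk_def hh unfolding qk_def w_def wdef hs up
    by (simp add: algebra_simps power2_eq_square)
  have inter: "\<forall>y. op1 d (b (Suc m)) w (op2 d p (Q m) (R m) y)
            = op2 d p (Q (Suc m)) (R (Suc m)) (op1 d (b (Suc m)) w y)"
  proof
    fix y
    show "op1 d (b (Suc m)) w (op2 d p (Q m) (R m) y) = op2 d p (Q (Suc m)) (R (Suc m)) (op1 d (b (Suc m)) w y)"
      using darboux_diff[OF hb, of w p "Q m" "R m" y] dR unfolding hq hr by simp
  qed
  have ISm: "I (Suc m)"
  proof
    fix j assume j: "j \<in> {Suc (Suc m)..n}"
    hence j': "j \<in> {Suc m..n}" by auto
    define G where "G = B m * F m j"
    have Fj: "F m j \<noteq> 0" and eigG: "op2 d p (Q m) (R m) G = c (lam j) * G"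
      using IH j' unfolding G_def by auto
    have Gnz: "G \<noteq> 0" using Fj Bnz by (simp add: G_def del: Fch.simps)
    have hA: "op1 d (b (Suc m)) w G = B (Suc m) * F (Suc m) j"
      using dB unfolding G_def op1_def w_def wdef a_def by (simp add: algebra_simps)
    have eig2: "op2 d p (Q (Suc m)) (R (Suc m)) (B (Suc m) * F (Suc m) j) = c (lam j) * (B (Suc m) * F (Suc m) j)"
    proof -
      have "op2 d p (Q (Suc m)) (R (Suc m)) (B (Suc m) * F (Suc m) j) = op2 d p (Q (Suc m)) (R (Suc m)) (op1 d (b (Suc m)) w G)"
        by (simp only: hA)
      also have "\<dots> = op1 d (b (Suc m)) w (op2 d p (Q m) (R m) G)" using inter by simp
      also have "\<dots> = op1 d (b (Suc m)) w (c (lam j) * G)" by (simp only: eigG)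
      also have "\<dots> = c (lam j) * op1 d (b (Suc m)) w G" by (rule op1_const) simp
      also have "\<dots> = c (lam j) * (B (Suc m) * F (Suc m) j)" by (simp only: hA)
      finally show ?thesis .
    qed
    have nz: "F (Suc m) j \<noteq> 0"
    proof
      assume F0: "F (Suc m) j = 0"
      hence dFj: "d (F m j) = a * F m j" by (simp add: a_def)
      define k where "k = F m j / F m (Suc m)"
      have dk: "d k = 0" unfolding k_def using Fm by (simp add: d_divide dFj a_def del: Fch.simps)
      have Gk: "G = k * psi" unfolding G_def k_def psi_def using Fm by (simp del: Fch.simps)
      have "c (lam j) * G = op2 d p (Q m) (R m) (k * psi)" using eigG unfolding Gk by simp
      also have "\<dots> = k * op2 d p (Q m) (R m) psi" by (rule op2_const[OF dk])
      also have "\<dots> = c (lam (Suc m)) * G" unfolding eigpsi Gk by (simp add: algebra_simps)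
      finally have "c (lam j) * G = c (lam (Suc m)) * G" .
      hence "c (lam j) = c (lam (Suc m))" using Gnz by simp
      hence "lam j = lam (Suc m)" by (rule c_inj)
      hence "j = Suc m" using inj j m by (auto dest: inj_onD)
      thus False using j by simp
    qed
    show "F (Suc m) j \<noteq> 0 \<and> op2 d p (Q (Suc m)) (R (Suc m)) (B (Suc m) * F (Suc m) j) = c (lam j) * (B (Suc m) * F (Suc m) j)"
      using nz eig2 by simp
  qed
  show ?thesis using inter ISm up WSm Wnz Fm unfolding w_def a_def by (simp del: Fch.simps)
qed


lemma inv: "m \<le> n \<Longrightarrow> \<forall>i\<le>m. I i"
proof (induction m)
  case 0
  then show ?case using I0 by simp
next
  case (Suc m)
  hence IH: "\<forall>i\<le>m. I i" by simp
  have "I (Suc m)" using step[of m] Suc.prems IH by simp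
  then show ?case using IH le_Suc_eq by blast
qed

lemma Fnz: "m \<le> n \<Longrightarrow> j \<in> {Suc m..n} \<Longrightarrow> F m j \<noteq> 0"
  using inv[of m] by auto

lemma ldrat: "m \<le> n \<Longrightarrow> \<forall>j\<in>{Suc m..n}. is_rational c z (d (F m j) / F m j)"
proof (induction m)
  case 0
  then show ?case using qr by (auto simp: quasi_rational_def)
next
  case (Suc m)
  show ?case
  proof
    fix j assume j: "j \<in> {Suc (Suc m)..n}"
    have r1: "is_rational c z (d (F m j) / F m j)" "is_rational c z (d (F m (Suc m)) / F m (Suc m))"
      using Suc j by auto
    define v where "v = d (F m j) / F m j - d (F m (Suc m)) / F m (Suc m)"
    have Fj: "F m j \<noteq> 0" using Fnz[of m j] Suc.prems j by auto
    have FS: "F (Suc m) j = F m j * v" using Fj by (simp add: v_def algebra_simps)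
    have FSnz: "F (Suc m) j \<noteq> 0" using Fnz[of "Suc m" j] Suc.prems j by auto
    hence vnz: "v \<noteq> 0" using FS by (simp del: Fch.simps)
    have "d (F (Suc m) j) / F (Suc m) j = d (F m j) / F m j + d v / v"
      unfolding FS by (rule ld_mult[OF Fj vnz])
    moreover have "is_rational c z v" unfolding v_def using r1 by (rule rat_diff)
    ultimately show "is_rational c z (d (F (Suc m) j) / F (Suc m) j)"
      using r1 by (simp add: rat_add rat_divide rat_d)
  qed
qed

lemma up_rat: "m \<le> n \<Longrightarrow> is_rational c z (upsilon d phi m)"
proof -
  assume m: "m \<le> n"
  have nz: "\<forall>i<m. F i (Suc i) \<noteq> 0" using Fnz m by auto
  have "upsilon d phi m = (\<Sum>i<m. d (F i (Suc i)) / F i (Suc i))"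
    unfolding upsilon_def wronskian_prod[OF nz] by (rule ld_prod) (use nz in auto)
  moreover have "is_rational c z (\<Sum>i<m. d (F i (Suc i)) / F i (Suc i))"
    by (rule rat_sum) (use ldrat m in auto)
  ultimately show ?thesis by simp
qed

lemma sg_rat: "m \<le> n \<Longrightarrow> is_rational c z (sigma d b m)"
  unfolding sigma_def
proof (rule rat_sum)
  fix i assume "m \<le> n" "i \<in> {1..m}"
  hence "is_rational c z (b i)" using rb by auto
  thus "is_rational c z (d (b i) / b i)" by (intro rat_divide rat_d)
qed

lemma final: "\<forall>k\<in>{1..n}.
           is_rational c z (qk d p q0 b k) \<and> is_rational c z (rk d p q0 r0 b phi k) \<and>
           is_rational c z (wk d b phi k) \<and>
           (\<forall>y. op1 d (b k) (wk d b phi k) (op2 d p (qk d p q0 b (k - 1)) (rk d p q0 r0 b phi (k - 1)) y)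
              = op2 d p (qk d p q0 b k) (rk d p q0 r0 b phi k) (op1 d (b k) (wk d b phi k) y))"
proof
  fix k assume k: "k \<in> {1..n}"
  then obtain m where km: "k = Suc m" and m: "m < n" by (cases k) auto
  have s1: "is_rational c z (sigma d b k)" "is_rational c z (sigma d b m)"
    using sg_rat k m by auto
  have u1: "is_rational c z (upsilon d phi k)" "is_rational c z (upsilon d phi m)"
    using up_rat k m by auto
  have "is_rational c z (qk d p q0 b k)"
    unfolding qk_def using s1 rp rq by (intro rat_add rat_diff rat_mult rat_of_nat rat_numeral rat_d) auto
  moreover have "is_rational c z (rk d p q0 r0 b phi k)"
    unfolding rk_def using s1 u1 rp rq rr
    by (intro rat_add rat_diff rat_mult rat_of_nat rat_numeral rat_d rat_power2 rat_divide rat_one) auto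
  moreover have "is_rational c z (wk d b phi k)"
    unfolding wk_def km using s1 u1 km by (intro rat_add rat_diff) auto
  moreover have "\<forall>y. op1 d (b k) (wk d b phi k) (op2 d p (qk d p q0 b (k - 1)) (rk d p q0 r0 b phi (k - 1)) y)
              = op2 d p (qk d p q0 b k) (rk d p q0 r0 b phi k) (op1 d (b k) (wk d b phi k) y)"
    using step[OF m inv[of m]] m km by simp
  ultimately show "is_rational c z (qk d p q0 b k) \<and> is_rational c z (rk d p q0 r0 b phi k) \<and>
           is_rational c z (wk d b phi k) \<and>
           (\<forall>y. op1 d (b k) (wk d b phi k) (op2 d p (qk d p q0 b (k - 1)) (rk d p q0 r0 b phi (k - 1)) y)
              = op2 d p (qk d p q0 b k) (rk d p q0 r0 b phi k) (op1 d (b k) (wk d b phi k) y))" by blast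
qed

end

theorem mainTheorem3:
  fixes d :: "'a::field \<Rightarrow> 'a" and c :: "complex \<Rightarrow> 'a" and z :: 'a
    and p q0 r0 :: 'a and phi b :: "nat \<Rightarrow> 'a" and lam :: "nat \<Rightarrow> complex" and n :: nat
  assumes "diff_field_over d c z"
    and "is_rational c z p" and "p \<noteq> 0" and "is_rational c z q0" and "is_rational c z r0"
    and "\<forall>k\<in>{1..n}. quasi_rational d c z (phi k)"
    and "\<forall>k\<in>{1..n}. op2 d p q0 r0 (phi k) = c (lam k) * phi k"
    and "inj_on lam {1..n}"
    and "\<forall>k\<in>{1..n}. is_rational c z (b k) \<and> b k \<noteq> 0"
  shows "\<forall>k\<in>{1..n}.
           is_rational c z (qk d p q0 b k) \<and> is_rational c z (rk d p q0 r0 b phi k) \<and>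
           is_rational c z (wk d b phi k) \<and>
           (\<forall>y. op1 d (b k) (wk d b phi k) (op2 d p (qk d p q0 b (k - 1)) (rk d p q0 r0 b phi (k - 1)) y)
              = op2 d p (qk d p q0 b k) (rk d p q0 r0 b phi k) (op1 d (b k) (wk d b phi k) y))"
proof -
  interpret setting d c z p q0 r0 phi b lam n
    by (unfold_locales) (use assms in \<open>auto simp: dfo_def\<close>)
  show ?thesis by (rule final)
qed

end
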